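(* Let $(G,M,I)$ be a finite total formal context and let $\mathcal S$ be its Dowker sheaf on $D(G,M,I)$. Then the zeroth cellular sheaf cohomology of $\mathcal S$ decomposes as $$H^0(\mathcal S)\cong\bigoplus_{\sigma\in D(G,M,I)}\operatorname{span}\widehat{M_\sigma},$$ so in particular $\dim H^0(\mathcal S)=|M|$, and $H^k(\mathcal S)=0$ for all $k>0$.
   Context: A formal context is a triple $(G,M,I)$ with $I\subseteq G\times M$; write $gIm$ for $(g,m)\in I$; for $A\subseteq G$, $A'=\{m: gIm\ \forall g\in A\}$, for $B\subseteq M$, $B'=\{g: gIm\ \forall m\in B\}$, $m'=\{m\}'$. It is total if $g'\ne\emptyset$ for all $g\in G$ and $m'\neq\emptyset$ for all $m\in M$. The Dowker complex $D(G,M,I)$ is the abstract simplicial complex on $G$ whose simplices are the nonempty $\sigma\subseteq G$ with $\sigma'\ne\emptyset$. For a simplex $\sigma$, $\widehat{M_\sigma}=\{m\in M: gIm \text{ iff } g\in\sigma\}=\{m: m'=\sigma\}$. The Dowker sheaf $\mathcal S$ assigns to each simplex $\sigma$ the real vector space $\mathcal S(\sigma)$ with basis $\sigma'$, and for $\sigma\subseteq\tau$ the restriction $\mathcal S(\sigma\subseteq\tau):\mathcal S(\sigma)\to\mathcal S(\tau)$ is the projection sending a basis element $m$ to $m$ if $m\in\tau'$ and to $0$ otherwise. Fix a linear order on $G$; for a $k$-simplex $\tau=\{g_0<\dots<g_k\}$ let $\tau_i=\tau\setminus\{g_i\}$. Cellular sheaf cohomology is the cohomology of the cochain complex $C^k=\bigoplus_{\dim\sigma=k}\mathcal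 S(\sigma)$ with $(d^k\delta)(\tau)=\sum_{i=0}^{k+1}(-1)^i\,\mathcal S(\tau_i\subseteq\tau)(\delta(\tau_i))$ for $(k+1)$-simplices $\tau$. *)

theory Defs
  imports "HOL-Analysis.Analysis" "HOL-Library.Function_Algebras"
begin

definition intent :: "'g set \<Rightarrow> 'm set \<Rightarrow> ('g \<times> 'm) set \<Rightarrow> 'g set \<Rightarrow> 'm set" where
  "intent G M I A = {m \<in> M. \<forall>g\<in>A. (g, m) \<in> I}"

definition extent :: "'g set \<Rightarrow> 'm set \<Rightarrow> ('g \<times> 'm) set \<Rightarrow> 'm set \<Rightarrow> 'g set" where
  "extent G M I B = {g \<in> G. \<forall>m\<in>B. (g, m) \<in> I}"

definition total_context :: "'g set \<Rightarrow> 'm set \<Rightarrow> ('g \<times> 'm) set \<Rightarrow> bool" where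
  "total_context G M I \<longleftrightarrow>
     (\<forall>g\<in>G. intent G M I {g} \<noteq> {}) \<and> (\<forall>m\<in>M. extent G M I {m} \<noteq> {})"

definition dowker :: "'g set \<Rightarrow> 'm set \<Rightarrow> ('g \<times> 'm) set \<Rightarrow> 'g set set" where
  "dowker G M I = {\<sigma>. \<sigma> \<noteq> {} \<and> \<sigma> \<subseteq> G \<and> intent G M I \<sigma> \<noteq> {}}"

definition simplices :: "'g set \<Rightarrow> 'm set \<Rightarrow> ('g \<times> 'm) set \<Rightarrow> nat \<Rightarrow> 'g set set" where
  "simplices G M I k = {\<sigma> \<in> dowker G M I. card \<sigma> = Suc k}"

definition hatM :: "'g set \<Rightarrow> 'm set \<Rightarrow> ('g \<times> 'm) set \<Rightarrow> 'g set \<Rightarrow> 'm set" where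
  "hatM G M I \<sigma> = {m \<in> M. extent G M I {m} = \<sigma>}"

definition fscale :: "real \<Rightarrow> ('a \<Rightarrow> real) \<Rightarrow> ('a \<Rightarrow> real)" where
  "fscale c f = (\<lambda>x. c * f x)"

(* A cochain is represented as a function \<delta> with \<delta>(\<sigma>,m) the coefficient of the
   basis element m \<in> \<sigma>' in the \<sigma>-component; it vanishes outside these pairs. *)
definition cochains :: "'g set \<Rightarrow> 'm set \<Rightarrow> ('g \<times> 'm) set \<Rightarrow> nat \<Rightarrow> ('g set \<times> 'm \<Rightarrow> real) set" where
  "cochains G M I k = {\<delta>. \<forall>\<sigma> m. \<delta> (\<sigma>, m) \<noteq> 0 \<longrightarrow> \<sigma> \<in> simplices G M I k \<and> m \<in> intent G M I \<sigma>}"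

definition face :: "'g::linorder set \<Rightarrow> nat \<Rightarrow> 'g set" where
  "face \<tau> i = \<tau> - {sorted_list_of_set \<tau> ! i}"

(* coboundary d^k : C^k \<rightarrow> C^{k+1};
   (d^k \<delta>)(\<tau>) = \<Sum>_{i=0}^{k+1} (-1)^i S(\<tau>_i \<subseteq> \<tau>)(\<delta>(\<tau>_i)),
   and the projection S(\<tau>_i \<subseteq> \<tau>) keeps exactly the coordinates m \<in> \<tau>'. *)
definition coboundary :: "'g::linorder set \<Rightarrow> 'm set \<Rightarrow> ('g \<times> 'm) set \<Rightarrow> nat
    \<Rightarrow> ('g set \<times> 'm \<Rightarrow> real) \<Rightarrow> ('g set \<times> 'm \<Rightarrow> real)" where
  "coboundary G M I k \<delta> = (\<lambda>(\<tau>, m).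
     if \<tau> \<in> simplices G M I (Suc k) \<and> m \<in> intent G M I \<tau>
     then (\<Sum>i = 0..Suc k. (-1) ^ i * \<delta> (face \<tau> i, m))
     else 0)"

definition cocycles :: "'g::linorder set \<Rightarrow> 'm set \<Rightarrow> ('g \<times> 'm) set \<Rightarrow> nat \<Rightarrow> ('g set \<times> 'm \<Rightarrow> real) set" where
  "cocycles G M I k = {\<delta> \<in> cochains G M I k. coboundary G M I k \<delta> = 0}"

definition coboundaries :: "'g::linorder set \<Rightarrow> 'm set \<Rightarrow> ('g \<times> 'm) set \<Rightarrow> nat \<Rightarrow> ('g set \<times> 'm \<Rightarrow> real) set" where
  "coboundaries G M I k =
     (case k of 0 \<Rightarrow> {0} | Suc j \<Rightarrow> coboundary G M I j ` cochains G M I j)"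

(* The direct sum \<Oplus>_{\<sigma> \<in> D} span \<widehat>{M_\<sigma>}, realised as functions on pairs (\<sigma>,m)
   with m \<in> \<widehat>{M_\<sigma>} (basis of the \<sigma>-summand) *)
definition hat_sum :: "'g set \<Rightarrow> 'm set \<Rightarrow> ('g \<times> 'm) set \<Rightarrow> ('g set \<times> 'm \<Rightarrow> real) set" where
  "hat_sum G M I = {f. \<forall>\<sigma> m. f (\<sigma>, m) \<noteq> 0 \<longrightarrow> \<sigma> \<in> dowker G M I \<and> m \<in> hatM G M I \<sigma>}"

end

theory Submission
  imports Defs
begin


definition sgn' :: "'g::linorder set \<Rightarrow> 'g \<Rightarrow> real" where
  "sgn' \<tau> x = (-1) ^ card {y\<in>\<tau>. y < x}"

lemma sum_fun_apply: "(\<Sum>i\<in>A. f i) x = (\<Sum>i\<in>A. f i x)"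
  by (induction A rule: infinite_finite_induct) auto

lemma card_less_nth:
  fixes xs :: "'g::linorder list"
  assumes "sorted_wrt (<) xs" "i < length xs"
  shows "card {y\<in>set xs. y < xs ! i} = i"
proof -
  have d: "distinct xs" using assms(1) strict_sorted_iff by blast
  have "{y\<in>set xs. y < xs ! i} = (!) xs ` {..<i}"
  proof (intro equalityI subsetI)
    fix y assume "y \<in> {y\<in>set xs. y < xs ! i}"
    then have "y \<in> set xs" "y < xs ! i" by auto
    then obtain j where j: "j < length xs" "y = xs ! j" by (auto simp: in_set_conv_nth)
    have "j < i"
    proof (rule ccontr)
      assume "\<not> j < i"
      then have "i = j \<or> i < j" by auto
      then show False using sorted_wrt_nth_less[OF assms(1), of i j] j \<open>y < xs ! i\<close> by auto
    qed
    then show "y \<in> (!) xs ` {..<i}" using j by auto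
  next
    fix y assume "y \<in> (!) xs ` {..<i}"
    then obtain j where "j < i" "y = xs ! j" by auto
    then show "y \<in> {y\<in>set xs. y < xs ! i}"
      using assms sorted_wrt_nth_less[OF assms(1), of j i] by auto
  qed
  moreover have "inj_on ((!) xs) {..<i}"
    using d assms(2) by (auto intro!: inj_onI simp: nth_eq_iff_index_eq)
  ultimately show ?thesis by (simp add: card_image)
qed

lemma alt_sum:
  fixes \<tau> :: "'g::linorder set"
  assumes "finite \<tau>" "card \<tau> = Suc n"
  shows "(\<Sum>i = 0..n. (-1) ^ i * f (face \<tau> i)) = (\<Sum>x\<in>\<tau>. sgn' \<tau> x * f (\<tau> - {x}))"
proof -
  define xs where "xs = sorted_list_of_set \<tau>"
  have s: "sorted_wrt (<) xs" and d: "distinct xs" and st: "set xs = \<tau>" and l: "length xs = Suc n"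
    using assms by (auto simp: xs_def)
  have "(\<Sum>x\<in>\<tau>. sgn' \<tau> x * f (\<tau> - {x})) = (\<Sum>i\<in>{..<length xs}. sgn' \<tau> (xs!i) * f (\<tau> - {xs!i}))"
    using sum.reindex_bij_betw[OF bij_betw_nth[OF d refl st[symmetric]], of "\<lambda>x. sgn' \<tau> x * f (\<tau> - {x})"]
    by simp
  also have "\<dots> = (\<Sum>i = 0..n. (-1) ^ i * f (face \<tau> i))"
  proof (rule sum.cong)
    show "{..<length xs} = {0..n}" using l by auto
  next
    fix i assume "i \<in> {0..n}"
    then have i: "i < length xs" using l by auto
    show "sgn' \<tau> (xs!i) * f (\<tau> - {xs!i}) = (-1) ^ i * f (face \<tau> i)"
      using card_less_nth[OF s i] st by (simp add: sgn'_def face_def xs_def)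
  qed
  finally show ?thesis by simp
qed

lemma sgn'_swap:
  fixes \<tau> :: "'g::linorder set"
  assumes "finite \<tau>" "x \<in> \<tau>" "y \<in> \<tau>" "x < y"
  shows "sgn' \<tau> x * sgn' (\<tau> - {x}) y = - (sgn' \<tau> y * sgn' (\<tau> - {y}) x)"
proof -
  have 1: "{z\<in>\<tau>. z < y} = insert x {z\<in>\<tau> - {x}. z < y}" using assms by auto
  have 2: "{z\<in>\<tau> - {y}. z < x} = {z\<in>\<tau>. z < x}" using assms by auto
  have "sgn' \<tau> y = - sgn' (\<tau> - {x}) y"
    unfolding sgn'_def 1 using assms(1) by (subst card_insert_disjoint) auto
  moreover have "sgn' (\<tau> - {y}) x = sgn' \<tau> x" unfolding sgn'_def 2 ..
  ultimately show ?thesis by simp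
qed

lemma sgn'_swap2:
  fixes \<tau> :: "'g::linorder set"
  assumes "finite \<tau>" "x \<in> \<tau>" "y \<in> \<tau>" "x \<noteq> y"
  shows "sgn' \<tau> x * sgn' (\<tau> - {x}) y = - (sgn' \<tau> y * sgn' (\<tau> - {y}) x)"
  using assms sgn'_swap[of \<tau> x y] sgn'_swap[of \<tau> y x] by (cases "x < y") auto

lemma antisym_sum:
  assumes "finite A" "\<And>x y. x \<in> A \<Longrightarrow> y \<in> A \<Longrightarrow> x \<noteq> y \<Longrightarrow> F x y = - F y x"
  shows "(\<Sum>x\<in>A. \<Sum>y\<in>A - {x}. F x y) = (0::real)"
proof -
  define F' where "F' x y = (if x = y then 0 else F x y)" for x y
  have e: "(\<Sum>x\<in>A. \<Sum>y\<in>A - {x}. F x y) = (\<Sum>x\<in>A. \<Sum>y\<in>A. F' x y)"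
  proof -
    have "(\<Sum>y\<in>A - {x}. F x y) = (\<Sum>y\<in>A. F' x y)" if x: "x \<in> A" for x
    proof -
    have "(\<Sum>y\<in>A. F' x y) = F' x x + (\<Sum>y\<in>A - {x}. F' x y)"
      using x assms(1) by (simp add: sum.remove)
    also have "\<dots> = (\<Sum>y\<in>A - {x}. F x y)" by (auto simp: F'_def split: if_splits intro!: sum.cong)
    finally show ?thesis by simp
    qed
    then show ?thesis by (rule sum.cong[OF refl])
  qed
  also have "\<dots> = (\<Sum>y\<in>A. \<Sum>x\<in>A. F' x y)" by (rule sum.swap)
  also have "\<dots> = (\<Sum>y\<in>A. \<Sum>x\<in>A. - F' y x)"
  proof (rule sum.cong[OF refl])
    fix y assume y: "y \<in> A"
    show "(\<Sum>x\<in>A. F' x y) = (\<Sum>x\<in>A. - F' y x)"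
    proof (rule sum.cong[OF refl])
      fix x assume x: "x \<in> A"
      show "F' x y = - F' y x" using assms(2)[OF x y] by (simp add: F'_def)
    qed
  qed
  also have "\<dots> = - (\<Sum>x\<in>A. \<Sum>y\<in>A - {x}. F x y)"
    unfolding e by (simp add: sum_negf)
  finally show ?thesis by simp
qed

lemma sgn'_min:
  assumes "\<And>y. y \<in> \<tau> \<Longrightarrow> v \<le> y"
  shows "sgn' \<tau> v = 1"
proof -
  have "{y\<in>\<tau>. y < v} = {}" using assms by force
  then show ?thesis by (simp only: sgn'_def) simp
qed




lemma intent_anti: "A \<subseteq> B \<Longrightarrow> intent G M I B \<subseteq> intent G M I A"
  by (auto simp: intent_def)

lemma simp_card: "\<tau> \<in> simplices G M I k \<Longrightarrow> finite \<tau> \<and> card \<tau> = Suc k"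
  by (auto simp: simplices_def intro: card_ge_0_finite)

lemma simp_remove:
  assumes "\<tau> \<in> simplices G M I (Suc k)" "x \<in> \<tau>"
  shows "\<tau> - {x} \<in> simplices G M I k"
proof -
  have f: "finite \<tau>" "card \<tau> = Suc (Suc k)" using simp_card[OF assms(1)] by auto
  then have c: "card (\<tau> - {x}) = Suc k" using assms(2) by simp
  then have "\<tau> - {x} \<noteq> {}" by (metis card.empty nat.distinct(1))
  moreover have "intent G M I (\<tau> - {x}) \<noteq> {}"
    using intent_anti[of "\<tau> - {x}" \<tau> G M I] assms(1) by (auto simp: simplices_def dowker_def)
  ultimately show ?thesis using assms(1) c by (auto simp: simplices_def dowker_def)
qed

lemma cob_alt:
  assumes "\<tau> \<in> simplices G M I (Suc k)" "m \<in> intent G M I \<tau>"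
  shows "coboundary G M I k \<delta> (\<tau>, m) = (\<Sum>x\<in>\<tau>. sgn' \<tau> x * \<delta> (\<tau> - {x}, m))"
  using assms alt_sum[of \<tau> "Suc k" "\<lambda>\<sigma>. \<delta> (\<sigma>, m)"] simp_card[OF assms(1)]
  by (simp add: coboundary_def)

lemma cob_out: assumes a: "\<not> (\<tau> \<in> simplices G M I (Suc k) \<and> m \<in> intent G M I \<tau>)"
  shows "coboundary G M I k \<delta> (\<tau>, m) = 0"
  unfolding coboundary_def prod.case if_not_P[OF a] ..

lemma dd0: "coboundary G M I (Suc j) (coboundary G M I j \<gamma>) = 0"
proof (rule ext, clarify)
  fix \<tau> m
  show "coboundary G M I (Suc j) (coboundary G M I j \<gamma>) (\<tau>, m) = 0 (\<tau>, m)"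
  proof (cases "\<tau> \<in> simplices G M I (Suc (Suc j)) \<and> m \<in> intent G M I \<tau>")
    case False then show ?thesis using cob_out[OF False] by simp
  next
    case True
    have fin: "finite \<tau>" using simp_card[OF conjunct1[OF True]] by (rule conjunct1)
    have "coboundary G M I (Suc j) (coboundary G M I j \<gamma>) (\<tau>, m)
        = (\<Sum>x\<in>\<tau>. sgn' \<tau> x * coboundary G M I j \<gamma> (\<tau> - {x}, m))"
      by (rule cob_alt) (use True in auto)
    also have "\<dots> = (\<Sum>x\<in>\<tau>. \<Sum>y\<in>\<tau> - {x}. sgn' \<tau> x * sgn' (\<tau> - {x}) y * \<gamma> (\<tau> - {x} - {y}, m))"
    proof (rule sum.cong[OF refl])
      fix x assume x: "x \<in> \<tau>"
      have "\<tau> - {x} \<in> simplices G M I (Suc j)" by (rule simp_remove[OF conjunct1[OF True] x])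
      moreover have "m \<in> intent G M I (\<tau> - {x})" using conjunct2[OF True] intent_anti[of "\<tau> - {x}" \<tau> G M I] by auto
      ultimately show "sgn' \<tau> x * coboundary G M I j \<gamma> (\<tau> - {x}, m) =
          (\<Sum>y\<in>\<tau> - {x}. sgn' \<tau> x * sgn' (\<tau> - {x}) y * \<gamma> (\<tau> - {x} - {y}, m))"
        by (simp add: cob_alt sum_distrib_left mult.assoc)
    qed
    also have "\<dots> = 0"
    proof (rule antisym_sum[OF fin])
      fix x y assume "x \<in> \<tau>" "y \<in> \<tau>" "x \<noteq> y"
      moreover have "\<tau> - {x} - {y} = \<tau> - {y} - {x}" by auto
      ultimately show "sgn' \<tau> x * sgn' (\<tau> - {x}) y * \<gamma> (\<tau> - {x} - {y}, m) =
         - (sgn' \<tau> y * sgn' (\<tau> - {y}) x * \<gamma> (\<tau> - {y} - {x}, m))"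
        using sgn'_swap2[OF fin, of x y] by simp
    qed
    finally show ?thesis by simp
  qed
qed

lemma cob_cochain: "coboundary G M I k \<delta> \<in> cochains G M I (Suc k)"
  by (auto simp: cochains_def coboundary_def)




lemma simp_sub: "\<tau> \<in> simplices G M I k \<Longrightarrow> \<tau> \<subseteq> G \<and> \<tau> \<noteq> {}"
  by (auto simp: simplices_def dowker_def)

lemma in_ext: "m \<in> intent G M I \<tau> \<Longrightarrow> \<tau> \<subseteq> G \<Longrightarrow> \<tau> \<subseteq> extent G M I {m}"
  by (auto simp: intent_def extent_def)

lemma simp_insert:
  assumes "\<tau> \<in> simplices G M I k" "m \<in> intent G M I \<tau>" "v \<in> extent G M I {m}" "v \<notin> \<tau>"
  shows "insert v \<tau> \<in> simplices G M I (Suc k)" "m \<in> intent G M I (insert v \<tau>)"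
proof -
  show m: "m \<in> intent G M I (insert v \<tau>)" using assms(2,3) by (auto simp: intent_def extent_def)
  show "insert v \<tau> \<in> simplices G M I (Suc k)"
    using assms m simp_card[OF assms(1)] by (auto simp: simplices_def dowker_def extent_def)
qed

lemma Hk:
  assumes fG: "finite G" and d: "\<delta> \<in> cocycles G M I (Suc j)"
  shows "\<delta> \<in> coboundary G M I j ` cochains G M I j"
proof -
  define v where "v m = Min (extent G M I {m})" for m
  define h where "h = (\<lambda>(\<sigma>, m). if \<sigma> \<in> simplices G M I j \<and> m \<in> intent G M I \<sigma> \<and> v m \<notin> \<sigma>
                    then \<delta> (insert (v m) \<sigma>, m) else 0)"
  have hc: "h \<in> cochains G M I j" by (auto simp: cochains_def h_def)
  have dc: "\<delta> \<in> cochains G M I (Suc j)" and dz: "coboundary G M I (Suc j) \<delta> = 0"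
    using d by (auto simp: cocycles_def)
  have "coboundary G M I j h = \<delta>"
  proof (rule ext, clarify)
    fix \<tau> m
    show "coboundary G M I j h (\<tau>, m) = \<delta> (\<tau>, m)"
    proof (cases "\<tau> \<in> simplices G M I (Suc j) \<and> m \<in> intent G M I \<tau>")
      case False
      then have "\<delta> (\<tau>, m) = 0" using dc by (auto simp: cochains_def)
      then show ?thesis using cob_out[OF False] by simp
    next
      case True
      have fin: "finite \<tau>" and card: "card \<tau> = Suc (Suc j)" using simp_card[OF conjunct1[OF True]] by auto
      have sub: "\<tau> \<subseteq> extent G M I {m}" using in_ext[of m G M I \<tau>] True simp_sub[of \<tau> G M I "Suc j"] by auto
      have fe: "finite (extent G M I {m})" using fG by (auto simp: extent_def)
      have ne: "\<tau> \<noteq> {}" using card by auto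
      have vin: "v m \<in> extent G M I {m}" using fe sub ne unfolding v_def by (auto intro!: Min_in)
      have vle: "\<And>y. y \<in> extent G M I {m} \<Longrightarrow> v m \<le> y" using fe unfolding v_def by auto
      have rem: "\<And>x. x \<in> \<tau> \<Longrightarrow> \<tau> - {x} \<in> simplices G M I j \<and> m \<in> intent G M I (\<tau> - {x})"
      proof -
        fix x assume x: "x \<in> \<tau>"
        have "intent G M I \<tau> \<subseteq> intent G M I (\<tau> - {x})" by (rule intent_anti) auto
        then show "\<tau> - {x} \<in> simplices G M I j \<and> m \<in> intent G M I (\<tau> - {x})"
          using simp_remove[OF conjunct1[OF True] x] conjunct2[OF True] by auto
      qed
      have "coboundary G M I j h (\<tau>, m) = (\<Sum>x\<in>\<tau>. sgn' \<tau> x * h (\<tau> - {x}, m))"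
        by (rule cob_alt) (use True in auto)
      also have "\<dots> = \<delta> (\<tau>, m)"
      proof (cases "v m \<in> \<tau>")
        case True
        have "(\<Sum>x\<in>\<tau>. sgn' \<tau> x * h (\<tau> - {x}, m)) = sgn' \<tau> (v m) * h (\<tau> - {v m}, m) + (\<Sum>x\<in>\<tau> - {v m}. sgn' \<tau> x * h (\<tau> - {x}, m))"
          using True fin by (simp add: sum.remove)
        also have "(\<Sum>x\<in>\<tau> - {v m}. sgn' \<tau> x * h (\<tau> - {x}, m)) = 0"
          using True by (intro sum.neutral) (auto simp: h_def)
        also have "sgn' \<tau> (v m) = 1" using sub vle by (intro sgn'_min) auto
        also have "h (\<tau> - {v m}, m) = \<delta> (\<tau>, m)"
          using rem[OF True] True by (simp add: h_def insert_absorb)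
        finally show ?thesis by simp
      next
        case False
        define \<tau>' where "\<tau>' = insert (v m) \<tau>"
        have t': "\<tau>' \<in> simplices G M I (Suc (Suc j))" "m \<in> intent G M I \<tau>'"
          using simp_insert[of \<tau> G M I "Suc j" m "v m"] True vin False by (auto simp: \<tau>'_def)
        have fin': "finite \<tau>'" using fin by (simp add: \<tau>'_def)
        have "0 = coboundary G M I (Suc j) \<delta> (\<tau>', m)" using dz by simp
        also have "\<dots> = (\<Sum>x\<in>\<tau>'. sgn' \<tau>' x * \<delta> (\<tau>' - {x}, m))"
          by (rule cob_alt[OF t'])
        also have "\<dots> = sgn' \<tau>' (v m) * \<delta> (\<tau>' - {v m}, m) + (\<Sum>x\<in>\<tau>. sgn' \<tau>' x * \<delta> (\<tau>' - {x}, m))"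
          using fin False by (simp add: \<tau>'_def)
        also have "sgn' \<tau>' (v m) = 1" using sub vle vin by (intro sgn'_min) (auto simp: \<tau>'_def)
        also have "\<tau>' - {v m} = \<tau>" using False by (auto simp: \<tau>'_def)
        also have "(\<Sum>x\<in>\<tau>. sgn' \<tau>' x * \<delta> (\<tau>' - {x}, m)) = - (\<Sum>x\<in>\<tau>. sgn' \<tau> x * h (\<tau> - {x}, m))"
          unfolding sum_negf[symmetric]
        proof (rule sum.cong[OF refl])
          fix x assume x: "x \<in> \<tau>"
          have vx: "v m < x" using vle[of x] sub x False by (auto simp: order.order_iff_strict)
          have "{z\<in>\<tau>'. z < x} = insert (v m) {z\<in>\<tau>. z < x}" using vx by (auto simp: \<tau>'_def)
          then have "card {z\<in>\<tau>'. z < x} = Suc (card {z\<in>\<tau>. z < x})" using fin False by simp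
          then have "sgn' \<tau>' x = - sgn' \<tau> x" unfolding sgn'_def by simp
          moreover have "\<tau>' - {x} = insert (v m) (\<tau> - {x})" using vx by (auto simp: \<tau>'_def)
          moreover have "h (\<tau> - {x}, m) = \<delta> (insert (v m) (\<tau> - {x}), m)"
            using rem[OF x] False by (simp add: h_def)
          ultimately show "sgn' \<tau>' x * \<delta> (\<tau>' - {x}, m) = - (sgn' \<tau> x * h (\<tau> - {x}, m))" by simp
        qed
        finally show ?thesis by simp
      qed
      finally show ?thesis .
    qed
  qed
  then show ?thesis using hc by (metis image_eqI)
qed




lemma pair_sgn: assumes "a < (b::'g::linorder)"
  shows "sgn' {a, b} a = 1" "sgn' {a, b} b = -1"
proof -
  show "sgn' {a, b} a = 1" using assms by (intro sgn'_min) auto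
  have "{y \<in> {a, b}. y < b} = {a}" using assms by auto
  then show "sgn' {a, b} b = -1" by (simp add: sgn'_def)
qed

lemma simp0: assumes tot: "total_context G M I" shows "\<sigma> \<in> simplices G M I 0 \<longleftrightarrow> (\<exists>g\<in>G. \<sigma> = {g})"
proof
  assume a: "\<sigma> \<in> simplices G M I 0"
  then have "card \<sigma> = 1" by (simp add: simplices_def)
  then obtain g where g: "\<sigma> = {g}" by (auto simp: card_1_singleton_iff)
  moreover have "g \<in> G" using a g by (simp add: simplices_def dowker_def)
  ultimately show "\<exists>g\<in>G. \<sigma> = {g}" by blast
next
  assume "\<exists>g\<in>G. \<sigma> = {g}"
  then obtain g where g: "g \<in> G" "\<sigma> = {g}" by blast
  have "intent G M I {g} \<noteq> {}" using tot g(1) by (simp add: total_context_def)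
  then show "\<sigma> \<in> simplices G M I 0" using g by (simp add: simplices_def dowker_def)
qed

lemma intent_single: "I \<subseteq> G \<times> M \<Longrightarrow> m \<in> intent G M I {g} \<longleftrightarrow> (g, m) \<in> I"
  by (auto simp: intent_def)

lemma extent_single: "I \<subseteq> G \<times> M \<Longrightarrow> g \<in> extent G M I {m} \<longleftrightarrow> (g, m) \<in> I"
  by (auto simp: extent_def)

lemma pair_simp:
  assumes "I \<subseteq> G \<times> M" "(g1, m) \<in> I" "(g2, m) \<in> I" "g1 \<noteq> g2"
  shows "{g1, g2} \<in> simplices G M I 1" "m \<in> intent G M I {g1, g2}"
  using assms by (auto simp: simplices_def dowker_def intent_def)

lemma L_eq0:
  assumes "I \<subseteq> G \<times> M" "\<delta> \<in> cocycles G M I 0" "(g1, m) \<in> I" "(g2, m) \<in> I" "g1 < g2"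
  shows "\<delta> ({g1}, m) = \<delta> ({g2}, m)"
proof -
  have ne: "g1 \<noteq> g2" using assms by auto
  have "0 = coboundary G M I 0 \<delta> ({g1, g2}, m)" using assms(2) by (simp add: cocycles_def)
  also have "\<dots> = (\<Sum>x\<in>{g1, g2}. sgn' {g1, g2} x * \<delta> ({g1, g2} - {x}, m))"
    using pair_simp[OF assms(1,3,4) ne] by (intro cob_alt) auto
  also have "\<dots> = \<delta> ({g2}, m) - \<delta> ({g1}, m)"
    using ne pair_sgn[OF assms(5)] by (simp add: insert_Diff_if)
  finally show ?thesis by simp
qed

lemma L_eq:
  assumes "I \<subseteq> G \<times> M" "\<delta> \<in> cocycles G M I 0" "(g1, m) \<in> I" "(g2, m) \<in> I"
  shows "\<delta> ({g1}, m) = \<delta> ({g2}, m)"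
proof (cases g1 g2 rule: linorder_cases)
  case less show ?thesis by (rule L_eq0[OF assms less])
next
  case equal then show ?thesis by simp
next
  case greater then show ?thesis using L_eq0[OF assms(1,2,4,3) greater] by simp
qed

lemma L_const:
  assumes "\<delta> \<in> cochains G M I 0" "\<And>\<sigma> m. \<sigma> \<in> simplices G M I 0 \<Longrightarrow> m \<in> intent G M I \<sigma> \<Longrightarrow> \<delta> (\<sigma>, m) = c m"
  shows "\<delta> \<in> cocycles G M I 0"
proof -
  have "coboundary G M I 0 \<delta> (\<tau>, m) = 0" for \<tau> m
  proof (cases "\<tau> \<in> simplices G M I (Suc 0) \<and> m \<in> intent G M I \<tau>")
    case False then show ?thesis by (rule cob_out)
  next
    case True
    have "card \<tau> = 2" using simp_card[OF conjunct1[OF True]] by simp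
    then obtain x y where xy: "\<tau> = {x, y}" "x \<noteq> y" by (meson card_2_iff)
    obtain a b where ab: "\<tau> = {a, b}" "a < b"
    proof (cases "x < y")
      case True then show ?thesis using that xy by blast
    next
      case False then have "y < x" using xy(2) by simp
      then show ?thesis using that[of y x] xy by (simp add: insert_commute)
    qed
    have "coboundary G M I 0 \<delta> (\<tau>, m) = (\<Sum>x\<in>\<tau>. sgn' \<tau> x * \<delta> (\<tau> - {x}, m))"
      by (rule cob_alt) (use True in auto)
    also have "\<dots> = (\<Sum>x\<in>\<tau>. sgn' \<tau> x * c m)"
    proof (rule sum.cong[OF refl])
      fix x assume x: "x \<in> \<tau>"
      have "\<tau> - {x} \<in> simplices G M I 0" "m \<in> intent G M I (\<tau> - {x})"
        using simp_remove[of \<tau> G M I 0 x] True x intent_anti[of "\<tau> - {x}" \<tau> G M I] by auto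
      then show "sgn' \<tau> x * \<delta> (\<tau> - {x}, m) = sgn' \<tau> x * c m" using assms(2) by simp
    qed
    also have "\<dots> = 0" using ab pair_sgn[OF ab(2)] by simp
    finally show ?thesis .
  qed
  then have "coboundary G M I 0 \<delta> = 0" by (intro ext) auto
  then show ?thesis using assms(1) by (simp add: cocycles_def)
qed

lemma vs: "vector_space (fscale :: real \<Rightarrow> ('a \<Rightarrow> real) \<Rightarrow> _)"
  by unfold_locales (auto simp: fscale_def fun_eq_iff algebra_simps)




theorem mainTheorem4:
  fixes G :: "'g::linorder set" and M :: "'m set" and I :: "('g \<times> 'm) set"
  assumes "finite G" and "finite M" and "I \<subseteq> G \<times> M"
    and "total_context G M I"
  shows "(\<exists>\<phi>. Vector_Spaces.linear fscale fscale \<phi> \<and>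
             bij_betw \<phi> (cocycles G M I 0) (hat_sum G M I))
       \<and> vector_space.dim fscale (cocycles G M I 0) = card M
       \<and> (\<forall>k>0. cocycles G M I k = coboundaries G M I k)"
proof (intro conjI)
  note fG = assms(1) and fM = assms(2) and IGM = assms(3) and tot = assms(4)
  define E where "E m = extent G M I {m}" for m
  have Efin: "finite (E m)" for m using fG by (auto simp: E_def extent_def)
  have Ene: "m \<in> M \<Longrightarrow> E m \<noteq> {}" for m using tot by (auto simp: E_def total_context_def)
  have Emem: "g \<in> E m \<longleftrightarrow> (g, m) \<in> I" for g m using extent_single[OF IGM] by (simp add: E_def)
  have Emin: "(Min (E m), m) \<in> I" if "m \<in> M" for m
  proof -
    have "Min (E m) \<in> E m" using Min_in[OF Efin Ene[OF that]] .
    then show ?thesis by (simp add: Emem)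
  qed
  have IM: "(g, m) \<in> I \<Longrightarrow> m \<in> M" for g m using IGM by auto
  have IG: "(g, m) \<in> I \<Longrightarrow> g \<in> G" for g m using IGM by auto
  have s0: "\<sigma> \<in> simplices G M I 0 \<and> m \<in> intent G M I \<sigma> \<longleftrightarrow> (\<exists>g. \<sigma> = {g} \<and> (g, m) \<in> I)" for \<sigma> m
  proof
    assume a: "\<sigma> \<in> simplices G M I 0 \<and> m \<in> intent G M I \<sigma>"
    then obtain g where g: "g \<in> G" "\<sigma> = {g}" using simp0[OF tot, of \<sigma>] by blast
    then have "(g, m) \<in> I" using a intent_single[OF IGM, of m g] by simp
    then show "\<exists>g. \<sigma> = {g} \<and> (g, m) \<in> I" using g by blast
  next
    assume "\<exists>g. \<sigma> = {g} \<and> (g, m) \<in> I"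
    then obtain g where g: "\<sigma> = {g}" "(g, m) \<in> I" by blast
    have "\<sigma> \<in> simplices G M I 0" using simp0[OF tot, of \<sigma>] g IG[OF g(2)] by blast
    moreover have "m \<in> intent G M I \<sigma>" using g intent_single[OF IGM, of m g] by simp
    ultimately show "\<sigma> \<in> simplices G M I 0 \<and> m \<in> intent G M I \<sigma>" by blast
  qed
  have cz: "\<delta> (\<sigma>, m) = 0" if "\<delta> \<in> cocycles G M I 0" "\<not> (\<exists>g. \<sigma> = {g} \<and> (g, m) \<in> I)" for \<delta> \<sigma> m
  proof -
    have "\<delta> (\<sigma>, m) \<noteq> 0 \<longrightarrow> \<sigma> \<in> simplices G M I 0 \<and> m \<in> intent G M I \<sigma>"
      using that(1) unfolding cocycles_def cochains_def by blast
    then show ?thesis using that(2) s0[of \<sigma> m] by blast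
  qed
  have cmin: "\<delta> ({g}, m) = \<delta> ({Min (E m)}, m)" if "\<delta> \<in> cocycles G M I 0" "(g, m) \<in> I" for \<delta> g m
    using L_eq[OF IGM that(1) that(2) Emin[OF IM[OF that(2)]]] .
  define \<phi> :: "('g set \<times> 'm \<Rightarrow> real) \<Rightarrow> ('g set \<times> 'm \<Rightarrow> real)" where
    "\<phi> \<delta> = (\<lambda>p. if snd p \<in> M \<and> fst p = E (snd p) then \<delta> ({Min (fst p)}, snd p) else 0)" for \<delta>
  show "\<exists>\<phi>. Vector_Spaces.linear fscale fscale \<phi> \<and> bij_betw \<phi> (cocycles G M I 0) (hat_sum G M I)"
  proof (intro exI conjI)
    show "Vector_Spaces.linear fscale fscale \<phi>"
      unfolding Vector_Spaces.linear_def module_hom_def module_hom_axioms_def module_iff_vector_space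
      by (auto simp: vs \<phi>_def fscale_def fun_eq_iff)
    show "bij_betw \<phi> (cocycles G M I 0) (hat_sum G M I)"
    proof (rule bij_betw_imageI)
      show "inj_on \<phi> (cocycles G M I 0)"
      proof (rule inj_onI)
        fix \<delta>1 \<delta>2 assume d1: "\<delta>1 \<in> cocycles G M I 0" and d2: "\<delta>2 \<in> cocycles G M I 0" and eq: "\<phi> \<delta>1 = \<phi> \<delta>2"
        show "\<delta>1 = \<delta>2"
        proof (rule ext, clarify)
          fix \<sigma> m
          show "\<delta>1 (\<sigma>, m) = \<delta>2 (\<sigma>, m)"
          proof (cases "\<exists>g. \<sigma> = {g} \<and> (g, m) \<in> I")
            case True
            then obtain g where g: "\<sigma> = {g}" "(g, m) \<in> I" by auto
            have "\<phi> \<delta>1 (E m, m) = \<phi> \<delta>2 (E m, m)" using eq by simp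
            then show ?thesis using g cmin[OF d1 g(2)] cmin[OF d2 g(2)] IM[OF g(2)]
              by (simp add: \<phi>_def)
          next
            case False then show ?thesis using cz[OF d1 False] cz[OF d2 False] by simp
          qed
        qed
      qed
      show "\<phi> ` cocycles G M I 0 = hat_sum G M I"
      proof (intro equalityI subsetI)
        fix f assume "f \<in> \<phi> ` cocycles G M I 0"
        then obtain \<delta> where f: "f = \<phi> \<delta>" by blast
        show "f \<in> hat_sum G M I" unfolding hat_sum_def
        proof (intro CollectI allI impI)
          fix \<sigma> m assume "f (\<sigma>, m) \<noteq> 0"
          then have m: "m \<in> M" "\<sigma> = E m" by (auto simp: f \<phi>_def split: if_splits)
          have "\<sigma> \<noteq> {}" using Ene[OF m(1)] m(2) by simp
          moreover have "\<sigma> \<subseteq> G" using m(2) by (auto simp: E_def extent_def)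
          moreover have "m \<in> intent G M I \<sigma>" using m by (auto simp: E_def extent_def intent_def)
          ultimately show "\<sigma> \<in> dowker G M I \<and> m \<in> hatM G M I \<sigma>"
            using m by (auto simp: dowker_def hatM_def E_def)
        qed
      next
        fix f assume f: "f \<in> hat_sum G M I"
        define \<delta> where "\<delta> = (\<lambda>(\<sigma>, m). if \<sigma> \<in> simplices G M I 0 \<and> m \<in> intent G M I \<sigma> then f (E m, m) else 0)"
        have dc: "\<delta> \<in> cochains G M I 0" by (auto simp: cochains_def \<delta>_def)
        have dz: "\<delta> \<in> cocycles G M I 0"
          by (rule L_const[OF dc, of "\<lambda>m. f (E m, m)"]) (simp add: \<delta>_def)
        have "\<phi> \<delta> = f"
        proof (rule ext, clarify)
          fix \<sigma> m
          show "\<phi> \<delta> (\<sigma>, m) = f (\<sigma>, m)"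
          proof (cases "m \<in> M \<and> \<sigma> = E m")
            case True
            then have "\<phi> \<delta> (\<sigma>, m) = \<delta> ({Min (E m)}, m)" by (simp add: \<phi>_def)
            also have "\<dots> = f (E m, m)" using s0[of "{Min (E m)}" m] Emin True by (simp add: \<delta>_def)
            finally show ?thesis using True by simp
          next
            case False
            then have "f (\<sigma>, m) = 0" using f by (auto simp: hat_sum_def hatM_def E_def)
            then show ?thesis using False by (auto simp: \<phi>_def)
          qed
        qed
        then show "f \<in> \<phi> ` cocycles G M I 0" using dz by blast
      qed
    qed
  qed
  show "vector_space.dim fscale (cocycles G M I 0) = card M"
  proof -
    interpret V: vector_space "fscale :: real \<Rightarrow> ('g set \<times> 'm \<Rightarrow> real) \<Rightarrow> _" by (rule vs)
    define e :: "'m \<Rightarrow> ('g set \<times> 'm \<Rightarrow> real)" where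
      "e m = (\<lambda>(\<sigma>, m2). if m2 = m \<and> (\<exists>g. \<sigma> = {g} \<and> (g, m) \<in> I) then 1 else 0)" for m
    define p where "p m = ({Min (E m)}, m)" for m
    have ep: "e m2 (p m) = (if m2 = m then 1 else 0)" if "m \<in> M" for m m2
      using Emin[OF that] by (auto simp: e_def p_def)
    have inj: "inj_on e M"
    proof (rule inj_onI)
      fix a b assume "a \<in> M" "b \<in> M" "e a = e b"
      then have "e a (p a) = e b (p a)" by simp
      then show "a = b" using ep \<open>a \<in> M\<close> by (auto split: if_splits)
    qed
    show ?thesis
    proof (rule V.dim_unique[of "e ` M"])
      show "card (e ` M) = card M" using inj by (simp add: card_image)
      show "e ` M \<subseteq> cocycles G M I 0"
      proof
        fix x assume "x \<in> e ` M"
        then obtain m where x: "x = e m" by auto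
        have dc: "x \<in> cochains G M I 0" by (auto simp: x cochains_def e_def s0)
        show "x \<in> cocycles G M I 0"
        proof (rule L_const[OF dc, of "\<lambda>m2. if m2 = m then 1 else 0"])
          fix \<sigma> m2 assume "\<sigma> \<in> simplices G M I 0" "m2 \<in> intent G M I \<sigma>"
          then obtain g where "\<sigma> = {g}" "(g, m2) \<in> I" using s0[of \<sigma> m2] by blast
          then show "x (\<sigma>, m2) = (if m2 = m then 1 else 0)" by (auto simp: x e_def)
        qed
      qed
      show "V.independent (e ` M)"
      proof (rule V.independent_if_scalars_zero)
        show "finite (e ` M)" using fM by simp
      next
        fix c x assume s: "(\<Sum>x\<in>e ` M. fscale (c x) x) = 0" and x: "x \<in> e ` M"
        then obtain m where m: "m \<in> M" "x = e m" by auto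
        have "0 = (\<Sum>y\<in>e ` M. fscale (c y) y) (p m)" using s by simp
        also have "\<dots> = (\<Sum>y\<in>e ` M. c y * y (p m))" by (simp add: sum_fun_apply fscale_def)
        also have "\<dots> = c x * x (p m) + (\<Sum>y\<in>e ` M - {x}. c y * y (p m))"
          using x fM by (simp add: sum.remove)
        also have "(\<Sum>y\<in>e ` M - {x}. c y * y (p m)) = 0"
        proof (rule sum.neutral, rule ballI)
          fix y assume "y \<in> e ` M - {x}"
          then obtain m2 where m2: "m2 \<in> M" "y = e m2" "m2 \<noteq> m" using m by auto
          then show "c y * y (p m) = 0" using ep[OF m(1), of m2] by simp
        qed
        also have "x (p m) = 1" using ep[OF m(1), of m] m by simp
        finally show "c x = 0" by simp
      qed
      show "cocycles G M I 0 \<subseteq> V.span (e ` M)"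
      proof
        fix \<delta> assume d: "\<delta> \<in> cocycles G M I 0"
        have eq: "\<delta> = (\<Sum>m\<in>M. fscale (\<delta> (p m)) (e m))"
        proof (rule ext, clarify)
          fix \<sigma> m2
          have "(\<Sum>m\<in>M. fscale (\<delta> (p m)) (e m)) (\<sigma>, m2)
              = (\<Sum>m\<in>M. if m = m2 then \<delta> (p m) * (if (\<exists>g. \<sigma> = {g} \<and> (g, m) \<in> I) then 1 else 0) else 0)"
            unfolding sum_fun_apply fscale_def e_def by (rule sum.cong[OF refl]) auto
          also have "\<dots> = (if m2 \<in> M then \<delta> (p m2) * (if (\<exists>g. \<sigma> = {g} \<and> (g, m2) \<in> I) then 1 else 0) else 0)"
            by (rule sum.delta[OF fM])
          also have "\<dots> = \<delta> (\<sigma>, m2)"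
          proof (cases "\<exists>g. \<sigma> = {g} \<and> (g, m2) \<in> I")
            case True
            then obtain g where g: "\<sigma> = {g}" "(g, m2) \<in> I" by auto
            then show ?thesis using cmin[OF d g(2)] IM[OF g(2)] by (auto simp: p_def)
          next
            case False then show ?thesis using cz[OF d False] by auto
          qed
          finally show "\<delta> (\<sigma>, m2) = (\<Sum>m\<in>M. fscale (\<delta> (p m)) (e m)) (\<sigma>, m2)" by simp
        qed
        have "(\<Sum>m\<in>M. fscale (\<delta> (p m)) (e m)) \<in> V.span (e ` M)"
          by (intro V.span_sum V.span_scale V.span_base) auto
        then show "\<delta> \<in> V.span (e ` M)" using eq by simp
      qed
    qed
  qed
  show "\<forall>k>0. cocycles G M I k = coboundaries G M I k"
  proof (intro allI impI)
    fix k :: nat assume "k > 0"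
    then obtain j where k: "k = Suc j" by (cases k) auto
    show "cocycles G M I k = coboundaries G M I k"
    proof (intro equalityI subsetI)
      fix \<delta> assume "\<delta> \<in> cocycles G M I k"
      then show "\<delta> \<in> coboundaries G M I k" using Hk[OF fG] by (simp add: k coboundaries_def)
    next
      fix \<delta> assume "\<delta> \<in> coboundaries G M I k"
      then obtain \<gamma> where "\<delta> = coboundary G M I j \<gamma>" by (auto simp: k coboundaries_def)
      then show "\<delta> \<in> cocycles G M I k" by (simp add: k cocycles_def cob_cochain dd0)
    qed
  qed
qed


end
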